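(* Let $G$ be a connected triangle-free graph with no full star-cutset. Then $G$ has no cut-vertex of degree at least three. Moreover, if $G$ is not a path with at most $4$ vertices, then $G$ has minimum degree at least $2$.
   Context: A full star-cutset of a connected graph $G$ is a set $N[u]=\{u\}\cup N(u)$ whose removal disconnects $G$. *)

theory Defs
  imports Main
begin

definition simple_graph :: "'a set \<Rightarrow> ('a \<Rightarrow> 'a \<Rightarrow> bool) \<Rightarrow> bool" where
  "simple_graph V E \<longleftrightarrow> finite V \<and> (\<forall>x y. E x y \<longrightarrow> x \<in> V \<and> y \<in> V)
     \<and> (\<forall>x y. E x y \<longrightarrow> E y x) \<and> (\<forall>x. \<not> E x x)"

definition reach_in :: "('a \<Rightarrow> 'a \<Rightarrow> bool) \<Rightarrow> 'a set \<Rightarrow> 'a \<Rightarrow> 'a \<Rightarrow> bool" where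
  "reach_in E S x y \<longleftrightarrow> (\<lambda>u v. E u v \<and> u \<in> S \<and> v \<in> S)\<^sup>*\<^sup>* x y"

definition connected_graph :: "'a set \<Rightarrow> ('a \<Rightarrow> 'a \<Rightarrow> bool) \<Rightarrow> bool" where
  "connected_graph V E \<longleftrightarrow> V \<noteq> {} \<and> (\<forall>x\<in>V. \<forall>y\<in>V. reach_in E V x y)"

definition disconnects :: "'a set \<Rightarrow> ('a \<Rightarrow> 'a \<Rightarrow> bool) \<Rightarrow> 'a set \<Rightarrow> bool" where
  "disconnects V E X \<longleftrightarrow> (\<exists>x\<in>V - X. \<exists>y\<in>V - X. \<not> reach_in E (V - X) x y)"

definition nbhd :: "('a \<Rightarrow> 'a \<Rightarrow> bool) \<Rightarrow> 'a \<Rightarrow> 'a set" where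
  "nbhd E u = {v. E u v}"

definition closed_nbhd :: "('a \<Rightarrow> 'a \<Rightarrow> bool) \<Rightarrow> 'a \<Rightarrow> 'a set" where
  "closed_nbhd E u = insert u (nbhd E u)"

definition degree :: "('a \<Rightarrow> 'a \<Rightarrow> bool) \<Rightarrow> 'a \<Rightarrow> nat" where
  "degree E u = card (nbhd E u)"

definition has_full_star_cutset :: "'a set \<Rightarrow> ('a \<Rightarrow> 'a \<Rightarrow> bool) \<Rightarrow> bool" where
  "has_full_star_cutset V E \<longleftrightarrow> (\<exists>u\<in>V. disconnects V E (closed_nbhd E u))"

definition cut_vertex :: "'a set \<Rightarrow> ('a \<Rightarrow> 'a \<Rightarrow> bool) \<Rightarrow> 'a \<Rightarrow> bool" where
  "cut_vertex V E v \<longleftrightarrow> v \<in> V \<and> disconnects V E {v}"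

definition triangle_free :: "('a \<Rightarrow> 'a \<Rightarrow> bool) \<Rightarrow> bool" where
  "triangle_free E \<longleftrightarrow> \<not> (\<exists>x y z. E x y \<and> E y z \<and> E x z)"

definition is_path_graph :: "'a set \<Rightarrow> ('a \<Rightarrow> 'a \<Rightarrow> bool) \<Rightarrow> bool" where
  "is_path_graph V E \<longleftrightarrow> (\<exists>xs. distinct xs \<and> set xs = V \<and>
     (\<forall>x y. E x y \<longleftrightarrow> (\<exists>i. Suc i < length xs \<and>
        ((x = xs ! i \<and> y = xs ! Suc i) \<or> (y = xs ! i \<and> x = xs ! Suc i)))))"

end

theory Submission imports Defs begin

lemma reach_refl: "reach_in E S x x" by (simp add: reach_in_def)

lemma reach_edge: "E x y \<Longrightarrow> x\<in>S \<Longrightarrow> y\<in>S \<Longrightarrow> reach_in E S x y"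
  by (auto simp: reach_in_def)

lemma reach_trans: "reach_in E S x y \<Longrightarrow> reach_in E S y z \<Longrightarrow> reach_in E S x z"
  unfolding reach_in_def by (rule rtranclp_trans)

lemma reach_mono: "reach_in E S x y \<Longrightarrow> S \<subseteq> T \<Longrightarrow> reach_in E T x y"
  unfolding reach_in_def
proof (induction rule: rtranclp_induct)
  case base then show ?case by simp
next
  case (step y z)
  have "(\<lambda>u v. E u v \<and> u \<in> T \<and> v \<in> T) y z" using step by auto
  with step show ?case by (simp add: rtranclp.rtrancl_into_rtrancl)
qed

lemma reach_sym: "reach_in E S x y \<Longrightarrow> simple_graph V E \<Longrightarrow> reach_in E S y x"
  unfolding reach_in_def
proof (induction rule: rtranclp_induct)
  case base then show ?case by simp
next
  case (step y z)
  define R where "R = (\<lambda>u v. E u v \<and> u \<in> S \<and> v \<in> S)"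
  have zy: "R z y" using step by (simp add: simple_graph_def R_def)
  have "R\<^sup>*\<^sup>* y x" using step by (simp add: R_def)
  with zy have "R\<^sup>*\<^sup>* z x" by (rule converse_rtranclp_into_rtranclp)
  then show ?case by (simp add: R_def)
qed

lemma sep: "reach_in E S x y \<Longrightarrow> x \<in> A \<Longrightarrow> (\<forall>a b. a \<in> A \<longrightarrow> E a b \<longrightarrow> a \<in> S \<longrightarrow> b \<in> S \<longrightarrow> b \<in> A) \<Longrightarrow> y \<in> A"
  unfolding reach_in_def
  by (induction rule: rtranclp_induct) auto

lemma to_nbr: "reach_in E V x v \<Longrightarrow> x \<in> V - {v} \<Longrightarrow> \<exists>n. E n v \<and> reach_in E (V-{v}) x n"
  unfolding reach_in_def
proof (induction rule: converse_rtranclp_induct)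
  case base then show ?case by simp
next
  case (step x y)
  show ?case
  proof (cases "y = v")
    case True then show ?thesis using step by (auto intro!: exI[of _ x])
  next
    case False
    then obtain n where n: "E n v" "(\<lambda>u w. E u w \<and> u \<in> V-{v} \<and> w \<in> V-{v})\<^sup>*\<^sup>* y n"
      using step by auto
    have "(\<lambda>u w. E u w \<and> u \<in> V-{v} \<and> w \<in> V-{v}) x y" using step False by auto
    with n show ?thesis by (auto intro: converse_rtranclp_into_rtranclp)
  qed
qed

lemma path4: "(\<exists>i. Suc i < length [a,b,c,d] \<and> P ([a,b,c,d]!i) ([a,b,c,d]!Suc i)) \<longleftrightarrow> P a b \<or> P b c \<or> P c d"
proof
  assume "\<exists>i. Suc i < length [a,b,c,d] \<and> P ([a,b,c,d]!i) ([a,b,c,d]!Suc i)"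
  then obtain i where i: "Suc i < length [a,b,c,d]" and p: "P ([a,b,c,d]!i) ([a,b,c,d]!Suc i)" by blast
  from i have "i = 0 \<or> i = 1 \<or> i = 2" by auto
  then show "P a b \<or> P b c \<or> P c d" using p by (auto simp: numeral_eq_Suc)
next
  assume "P a b \<or> P b c \<or> P c d"
  then show "\<exists>i. Suc i < length [a,b,c,d] \<and> P ([a,b,c,d]!i) ([a,b,c,d]!Suc i)"
  proof (elim disjE)
    assume "P a b" then show ?thesis by (intro exI[of _ 0]) simp
  next
    assume "P b c" then show ?thesis by (intro exI[of _ 1]) simp
  next
    assume "P c d" then show ?thesis by (intro exI[of _ 2]) (simp add: numeral_eq_Suc)
  qed
qed


lemma path3: "(\<exists>i. Suc i < length [a,b,c] \<and> P ([a,b,c]!i) ([a,b,c]!Suc i)) \<longleftrightarrow> P a b \<or> P b c"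
proof
  assume "\<exists>i. Suc i < length [a,b,c] \<and> P ([a,b,c]!i) ([a,b,c]!Suc i)"
  then obtain i where i: "Suc i < length [a,b,c]" and p: "P ([a,b,c]!i) ([a,b,c]!Suc i)" by blast
  from i have "i = 0 \<or> i = 1" by auto
  then show "P a b \<or> P b c" using p by (auto simp: numeral_eq_Suc)
next
  assume "P a b \<or> P b c"
  then show "\<exists>i. Suc i < length [a,b,c] \<and> P ([a,b,c]!i) ([a,b,c]!Suc i)"
  proof (elim disjE)
    assume "P a b" then show ?thesis by (intro exI[of _ 0]) simp
  next
    assume "P b c" then show ?thesis by (intro exI[of _ 1]) simp
  qed
qed

lemma path2: "(\<exists>i. Suc i < length [a,b] \<and> P ([a,b]!i) ([a,b]!Suc i)) \<longleftrightarrow> P a b"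
proof
  assume "\<exists>i. Suc i < length [a,b] \<and> P ([a,b]!i) ([a,b]!Suc i)"
  then obtain i where i: "Suc i < length [a,b]" and p: "P ([a,b]!i) ([a,b]!Suc i)" by blast
  from i have "i = 0" by auto
  then show "P a b" using p by auto
next
  assume "P a b"
  then show "\<exists>i. Suc i < length [a,b] \<and> P ([a,b]!i) ([a,b]!Suc i)" by (intro exI[of _ 0]) simp
qed

definition cons_rel :: "'a \<Rightarrow> 'a \<Rightarrow> 'a \<Rightarrow> 'a \<Rightarrow> bool" where
  "cons_rel x y p q \<longleftrightarrow> (x = p \<and> y = q) \<or> (y = p \<and> x = q)"

lemma mk_path:
  assumes "distinct xs" "set xs = V" "length xs \<le> 4"
    "\<And>x y. E x y \<longleftrightarrow> (\<exists>i. Suc i < length xs \<and> cons_rel x y (xs ! i) (xs ! Suc i))"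
  shows "is_path_graph V E \<and> card V \<le> 4"
proof
  show "is_path_graph V E" unfolding is_path_graph_def
    using assms by (intro exI[of _ xs]) (simp add: cons_rel_def)
  show "card V \<le> 4" using assms distinct_card by fastforce
qed

lemma triangle: "triangle_free E \<Longrightarrow> E x y \<Longrightarrow> E y z \<Longrightarrow> E x z \<Longrightarrow> False"
  unfolding triangle_free_def by blast

theorem mainTheorem17:
  fixes V :: "'a set" and E :: "'a \<Rightarrow> 'a \<Rightarrow> bool"
  assumes "simple_graph V E"
    and "connected_graph V E"
    and "triangle_free E"
    and "\<not> has_full_star_cutset V E"
  shows "(\<forall>v. cut_vertex V E v \<longrightarrow> degree E v < 3)
    \<and> (\<not> (is_path_graph V E \<and> card V \<le> 4) \<longrightarrow> (\<forall>v\<in>V. degree E v \<ge> 2))"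
proof -
  note sg = assms(1)
  have inV: "\<And>x y. E x y \<Longrightarrow> x \<in> V \<and> y \<in> V" and sym: "\<And>x y. E x y \<Longrightarrow> E y x"
    and irr: "\<And>x. \<not> E x x" and finV: "finite V"
    using sg by (auto simp: simple_graph_def)
  have conn: "\<And>x y. x \<in> V \<Longrightarrow> y \<in> V \<Longrightarrow> reach_in E V x y"
    using assms(2) by (auto simp: connected_graph_def)
  have tri: "\<And>x y z. E x y \<Longrightarrow> E y z \<Longrightarrow> E x z \<Longrightarrow> False"
    using assms(3) triangle by metis
  have nocut: "\<And>u x y. u \<in> V \<Longrightarrow> x \<in> V - closed_nbhd E u \<Longrightarrow> y \<in> V - closed_nbhd E u
      \<Longrightarrow> reach_in E (V - closed_nbhd E u) x y"
    using assms(4) by (auto simp: has_full_star_cutset_def disconnects_def)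
  have part1: "degree E v < 3" if cv: "cut_vertex V E v" for v
  proof (rule ccontr)
    assume "\<not> degree E v < 3"
    then have d3: "card (nbhd E v) \<ge> 3" by (simp add: degree_def)
    define S where "S = V - {v}"
    have vV: "v \<in> V" and dis: "disconnects V E {v}" using cv by (auto simp: cut_vertex_def)
    then obtain a b where ab: "a \<in> S" "b \<in> S" "\<not> reach_in E S a b"
      by (auto simp: disconnects_def S_def)
    obtain na where na: "E na v" "reach_in E S a na"
      using to_nbr[OF conn[of a v]] ab vV by (auto simp: S_def)
    obtain nb where nb: "E nb v" "reach_in E S b nb"
      using to_nbr[OF conn[of b v]] ab vV by (auto simp: S_def)
    have nS: "\<And>n. E v n \<Longrightarrow> n \<in> S" using inV irr S_def by blast
    have nanb: "\<not> reach_in E S na nb"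
    proof
      assume "reach_in E S na nb"
      then have "reach_in E S a nb" by (rule reach_trans[OF na(2)])
      then have "reach_in E S a b" by (rule reach_trans) (rule reach_sym[OF nb(2) sg])
      then show False using ab by simp
    qed
    have fin: "finite (nbhd E v)" using finV inV by (auto simp: nbhd_def intro: finite_subset)
    have "\<not> nbhd E v \<subseteq> {na, nb}"
    proof
      assume "nbhd E v \<subseteq> {na, nb}"
      then have "card (nbhd E v) \<le> card {na, nb}" by (intro card_mono) auto
      also have "\<dots> \<le> 2" by (simp add: card_insert_if)
      finally show False using d3 by simp
    qed
    then obtain nc where nc: "E v nc" "nc \<noteq> na" "nc \<noteq> nb" by (auto simp: nbhd_def)
    have vna: "E v na" "E v nb" using na nb sym by auto
    have key: "False" if "E v p" "x \<in> S" "y \<in> S" "x \<notin> closed_nbhd E p" "y \<notin> closed_nbhd E p"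
        "\<not> reach_in E S x y" for p x y
    proof -
      have pV: "p \<in> V" using inV that by blast
      have "v \<in> closed_nbhd E p" using that sym by (auto simp: closed_nbhd_def nbhd_def)
      then have sub: "V - closed_nbhd E p \<subseteq> S" by (auto simp: S_def)
      have "x \<in> V - closed_nbhd E p" "y \<in> V - closed_nbhd E p" using that by (auto simp: S_def)
      then have "reach_in E (V - closed_nbhd E p) x y" using nocut pV by blast
      then have "reach_in E S x y" by (rule reach_mono[OF _ sub])
      then show False using that by simp
    qed
    have notN: "x \<notin> closed_nbhd E p" if "p \<in> S" "x \<in> S" "\<not> reach_in E S p x" for p x
    proof
      assume "x \<in> closed_nbhd E p"
      then have "x = p \<or> E p x" by (simp add: closed_nbhd_def nbhd_def)
      then have "reach_in E S p x"
      proof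
        assume "x = p" then show ?thesis by (simp add: reach_refl)
      next
        assume "E p x" then show ?thesis using that(1,2) by (rule reach_edge)
      qed
      then show False using that(3) by simp
    qed
    have triN: "x \<notin> closed_nbhd E p" if "E v p" "E v x" "x \<noteq> p" for p x
    proof
      assume "x \<in> closed_nbhd E p"
      then have "E p x" using that(3) by (simp add: closed_nbhd_def nbhd_def)
      then show False using tri[OF that(1) _ that(2)] by blast
    qed
    have reachsym: "\<And>x y. reach_in E S x y \<Longrightarrow> reach_in E S y x" by (rule reach_sym[OF _ sg])
    show False
    proof (cases "reach_in E S na nc")
      case True
      have A: "\<not> reach_in E S nc nb"
      proof
        assume "reach_in E S nc nb"
        then have "reach_in E S na nb" by (rule reach_trans[OF True])
        then show False using nanb by simp
      qed
      have B: "nc \<notin> closed_nbhd E na" by (rule triN[OF vna(1) nc(1) nc(2)])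
      have C: "nb \<notin> closed_nbhd E na" by (rule notN[OF nS[OF vna(1)] nS[OF vna(2)] nanb])
      show False by (rule key[OF vna(1) nS[OF nc(1)] nS[OF vna(2)] B C A])
    next
      case False
      show False
      proof (cases "reach_in E S nb nc")
        case True
        have A: "\<not> reach_in E S nc na"
        proof
          assume "reach_in E S nc na"
          then have "reach_in E S nb na" by (rule reach_trans[OF True])
          then have "reach_in E S na nb" by (rule reachsym)
          then show False using nanb by simp
        qed
        have nbna: "\<not> reach_in E S nb na"
        proof
          assume "reach_in E S nb na"
          then have "reach_in E S na nb" by (rule reachsym)
          then show False using nanb by simp
        qed
        have B: "nc \<notin> closed_nbhd E nb" by (rule triN[OF vna(2) nc(1) nc(3)])
        have C: "na \<notin> closed_nbhd E nb" by (rule notN[OF nS[OF vna(2)] nS[OF vna(1)] nbna])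
        show False by (rule key[OF vna(2) nS[OF nc(1)] nS[OF vna(1)] B C A])
      next
        case F2: False
        have A: "\<not> reach_in E S nb nc" using F2 .
        have B: "nc \<notin> closed_nbhd E na" by (rule triN[OF vna(1) nc(1) nc(2)])
        have C: "nb \<notin> closed_nbhd E na" by (rule notN[OF nS[OF vna(1)] nS[OF vna(2)] nanb])
        show False by (rule key[OF vna(1) nS[OF vna(2)] nS[OF nc(1)] C B A])
      qed
    qed
  qed
  have part2: "degree E v \<ge> 2" if np: "\<not> (is_path_graph V E \<and> card V \<le> 4)" and vV: "v \<in> V" for v
  proof (rule ccontr)
    assume "\<not> degree E v \<ge> 2"
    then have d: "card (nbhd E v) \<le> 1" by (simp add: degree_def)
    have fin: "finite (nbhd E v)" using finV inV by (auto simp: nbhd_def intro: finite_subset)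
    have "nbhd E v = {} \<or> (\<exists>u. nbhd E v = {u})"
      using d fin by (metis One_nat_def card_1_singletonE card_0_eq le_Suc_eq le_zero_eq)
    then show False
    proof
      assume e: "nbhd E v = {}"
      then have nv: "\<And>y. \<not> E v y" by (auto simp: nbhd_def)
      have V1: "V = {v}"
      proof
        show "V \<subseteq> {v}"
        proof
          fix y assume "y \<in> V"
          then have "reach_in E V v y" using conn vV by blast
          then show "y \<in> {v}" by (rule sep) (use nv in auto)
        qed
      qed (use vV in auto)
      have "is_path_graph V E \<and> card V \<le> 4"
      proof (rule mk_path[of "[v]"])
        fix x y show "E x y \<longleftrightarrow> (\<exists>i. Suc i < length [v] \<and> cons_rel x y ([v] ! i) ([v] ! Suc i))"
          using V1 inV irr by auto
      qed (use V1 in auto)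
      then show False using np by simp
    next
      assume "\<exists>u. nbhd E v = {u}"
      then obtain u where "nbhd E v = {u}" by blast
      then have vy: "\<And>y. E v y \<longleftrightarrow> y = u" by (auto simp: nbhd_def)
      have uV: "u \<in> V" "u \<noteq> v" using vy inV irr by blast+
      show False
      proof (cases "\<exists>w. E u w \<and> w \<noteq> v")
        case False
        then have uy: "\<And>y. E u y \<longleftrightarrow> y = v" using vy sym by blast
        have V2: "V = {v, u}"
        proof
          show "V \<subseteq> {v, u}"
          proof
            fix y assume "y \<in> V"
            then have "reach_in E V v y" using conn vV by blast
            then show "y \<in> {v, u}" by (rule sep) (use vy uy in auto)
          qed
        qed (use vV uV in auto)
        have "is_path_graph V E \<and> card V \<le> 4"
        proof (rule mk_path[of "[v, u]"])
          fix x y show "E x y \<longleftrightarrow> (\<exists>i. Suc i < length [v, u] \<and> cons_rel x y ([v, u] ! i) ([v, u] ! Suc i))"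
            unfolding path2[of _ _ "cons_rel x y"] cons_rel_def
            using V2 inV irr vy uy by auto
        qed (use V2 uV in auto)
        then show False using np by simp
      next
        case True
        then obtain w where uw: "E u w" "w \<noteq> v" by blast
        have wV: "w \<in> V" using uw inV by blast
        have wv: "\<not> E w v" using uw vy sym irr by metis
        have Vw: "V = insert v (closed_nbhd E w)"
        proof (rule ccontr)
          assume "V \<noteq> insert v (closed_nbhd E w)"
          moreover have "insert v (closed_nbhd E w) \<subseteq> V"
            using vV wV inV by (auto simp: closed_nbhd_def nbhd_def)
          ultimately obtain y where y: "y \<in> V" "y \<notin> insert v (closed_nbhd E w)" by blast
          have "v \<in> V - closed_nbhd E w" using vV uw wv by (auto simp: closed_nbhd_def nbhd_def)
          then have "reach_in E (V - closed_nbhd E w) v y" using nocut y wV by blast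
          then have "y \<in> {v}"
            by (rule sep) (use vy uw sym in \<open>auto simp: closed_nbhd_def nbhd_def\<close>)
          then show False using y by simp
        qed
        have uy: "\<And>y. E u y \<longleftrightarrow> y = v \<or> y = w"
        proof
          fix y assume "E u y"
          then have "y \<in> V" using inV by blast
          then show "y = v \<or> y = w" using Vw tri uw \<open>E u y\<close>
            by (auto simp: closed_nbhd_def nbhd_def)
        qed (use vy sym uw in auto)
        define X where "X = nbhd E w - {u}"
        have Xf: "x \<noteq> u \<and> x \<noteq> v \<and> x \<noteq> w \<and> E w x \<and> \<not> E u x" if "x \<in> X" for x
          using that uw wv irr tri unfolding X_def nbhd_def by blast
        have wy: "\<And>y. E w y \<longleftrightarrow> y = u \<or> y \<in> X" using sym uw by (auto simp: X_def nbhd_def)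
        have VX: "V = {v, u, w} \<union> X" using Vw uw sym by (auto simp: closed_nbhd_def nbhd_def X_def)
        have X1: "x1 = x2" if "x1 \<in> X" "x2 \<in> X" for x1 x2
        proof (rule ccontr)
          assume ne: "x1 \<noteq> x2"
          have "x1 \<in> V - closed_nbhd E u" "x2 \<in> V - closed_nbhd E u"
            using that Xf VX by (auto simp: closed_nbhd_def nbhd_def)
          then have "reach_in E (V - closed_nbhd E u) x1 x2" using nocut uV by blast
          then have "x2 \<in> {x1}"
          proof (rule sep)
            show "\<forall>a b. a \<in> {x1} \<longrightarrow> E a b \<longrightarrow> a \<in> V - closed_nbhd E u \<longrightarrow> b \<in> V - closed_nbhd E u \<longrightarrow> b \<in> {x1}"
            proof (intro allI impI)
              fix a b assume a: "a \<in> {x1}" "E a b" "a \<in> V - closed_nbhd E u" "b \<in> V - closed_nbhd E u"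
              then have "b \<in> V" "b \<noteq> u" "\<not> E u b" by (auto simp: closed_nbhd_def nbhd_def)
              then have "b = v \<or> b = w \<or> b \<in> X" using VX by auto
              moreover have "b \<noteq> v"
              proof
                assume "b = v"
                then have "E v x1" using a sym by auto
                then have "x1 = u" using vy by simp
                then show False using Xf[OF that(1)] by simp
              qed
              moreover have "b \<noteq> w" using uy \<open>\<not> E u b\<close> by blast
              moreover have "b \<notin> X" using a tri Xf that by auto
              ultimately show "b \<in> {x1}" by blast
            qed
          qed simp
          then show False using ne by simp
        qed
        show False
        proof (cases "X = {}")
          case True
          have V3: "V = {v, u, w}" using VX True by simp
          have "is_path_graph V E \<and> card V \<le> 4"
          proof (rule mk_path[of "[v, u, w]"])
            fix x y show "E x y \<longleftrightarrow> (\<exists>i. Suc i < length [v, u, w] \<and> cons_rel x y ([v, u, w] ! i) ([v, u, w] ! Suc i))"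
            proof -
              have eq: "(\<exists>i. Suc i < length [v, u, w] \<and> cons_rel x y ([v, u, w] ! i) ([v, u, w] ! Suc i))
                  \<longleftrightarrow> cons_rel x y v u \<or> cons_rel x y u w" by (rule path3)
              have e2: "E x y \<longleftrightarrow> cons_rel x y v u \<or> cons_rel x y u w" unfolding cons_rel_def
              proof
                assume xy: "E x y"
                then have "x = v \<or> x = u \<or> x = w" using inV V3 by blast
                then show "(x = v \<and> y = u \<or> y = v \<and> x = u) \<or> (x = u \<and> y = w \<or> y = u \<and> x = w)"
                  using xy vy uy wy True by (elim disjE) auto
              next
                assume "(x = v \<and> y = u \<or> y = v \<and> x = u) \<or> (x = u \<and> y = w \<or> y = u \<and> x = w)"
                then show "E x y" using vy uy sym by auto
              qed
              show ?thesis by (rule trans[OF e2 eq[symmetric]])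
            qed
          qed (use V3 uV uw irr in auto)
          then show False using np by simp
        next
          case False
          then obtain x where xX: "x \<in> X" by blast
          then have Xx: "X = {x}" using X1 by blast
          have xf: "x \<noteq> u" "x \<noteq> v" "x \<noteq> w" "E w x" "\<not> E u x" using Xf xX by auto
          have V4: "V = {v, u, w, x}" using VX Xx by auto
          have xy: "\<And>y. E x y \<longleftrightarrow> y = w"
          proof
            fix y assume "E x y"
            then have "y \<in> V" "E y x" using inV sym by auto
            then show "y = w" using V4 vy uy xf irr by auto
          qed (use xf sym in auto)
          have "is_path_graph V E \<and> card V \<le> 4"
          proof (rule mk_path[of "[v, u, w, x]"])
            fix a b show "E a b \<longleftrightarrow> (\<exists>i. Suc i < length [v, u, w, x] \<and> cons_rel a b ([v, u, w, x] ! i) ([v, u, w, x] ! Suc i))"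
            proof -
              have eq: "(\<exists>i. Suc i < length [v, u, w, x] \<and> cons_rel a b ([v, u, w, x] ! i) ([v, u, w, x] ! Suc i))
                  \<longleftrightarrow> cons_rel a b v u \<or> cons_rel a b u w \<or> cons_rel a b w x" by (rule path4)
              have e2: "E a b \<longleftrightarrow> cons_rel a b v u \<or> cons_rel a b u w \<or> cons_rel a b w x" unfolding cons_rel_def
              proof
                assume ab: "E a b"
                then have "a = v \<or> a = u \<or> a = w \<or> a = x" using inV V4 by blast
                then show "(a = v \<and> b = u \<or> b = v \<and> a = u) \<or> (a = u \<and> b = w \<or> b = u \<and> a = w) \<or> (a = w \<and> b = x \<or> b = w \<and> a = x)"
                  using ab vy uy wy xy Xx by (elim disjE) auto
              next
                assume "(a = v \<and> b = u \<or> b = v \<and> a = u) \<or> (a = u \<and> b = w \<or> b = u \<and> a = w) \<or> (a = w \<and> b = x \<or> b = w \<and> a = x)"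
                then show "E a b" using vy uy wy xy Xx sym by auto
              qed
              show ?thesis by (rule trans[OF e2 eq[symmetric]])
            qed
          qed (use V4 uV uw xf irr in auto)
          then show False using np by simp
        qed
      qed
    qed
  qed
  show ?thesis using part1 part2 by blast
qed

end
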